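(* Suppose that $A \in (\mathbb{S}_{\max})^{n \times n}$, let $\gamma$ be a $\mathbb{S}_{\max}$-eigenvalue of $A$ and denote $B=\gamma I \ominus A$. Then \[ A \, B^{\mathrm{adj}} \,\nabla\, \gamma B^{\mathrm{adj}} \enspace. \]
   Context: $\mathbb{S}_{\max}$ is the symmetrized tropical semiring over a divisible totally ordered abelian group, with zero $\mathbf{0}$, unit $\mathbf{1}$, minus $\ominus$; $\mathbb{S}_{\max}^\vee$ is the set of signed elements (positive, negative, or $\mathbf{0}$). The balance relation is $a\,\nabla\, b$ iff $a\ominus b$ is balanced (of the form $c\ominus c$), applied entrywise to matrices. $\det(A)=\bigoplus_\pi\mathrm{sgn}(\pi)\prod_i a_{i\pi(i)}$ with $\mathrm{sgn}(\pi)\in\{\mathbf{1},\ominus\mathbf{1}\}$; $(B^{\mathrm{adj}})_{ij}=(\ominus\mathbf{1})^{i+j}\det B[\hat j,\hat i]$, where $B[\hat j,\hat i]$ is $B$ with row $j$ and column $i$ removed. An $\mathbb{S}_{\max}$-eigenvalue of $A$ is a $\gamma\in\mathbb{S}_{\max}^\vee$ with $\det(\gamma I\ominus A)\,\nabla\,\mathbf{0}$. *)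

theory Defs
  imports "HOL-Combinatorics.Permutations"
begin

text \<open>Symmetrized tropical (max-plus) semiring over a totally ordered abelian group G
(written additively; the tropical product is the group operation, the tropical sum is max).
A nonzero element has a modulus in G and a sign: positive, negative, or balanced.\<close>

datatype ssign = SPos | SNeg | SBal

datatype 'a smax = SZero | SElt 'a ssign

fun ssign_add :: "ssign \<Rightarrow> ssign \<Rightarrow> ssign" where
  "ssign_add SPos SPos = SPos"
| "ssign_add SNeg SNeg = SNeg"
| "ssign_add _ _ = SBal"

fun ssign_mul :: "ssign \<Rightarrow> ssign \<Rightarrow> ssign" where
  "ssign_mul SBal _ = SBal"
| "ssign_mul _ SBal = SBal"
| "ssign_mul SPos t = t"
| "ssign_mul SNeg SPos = SNeg"
| "ssign_mul SNeg SNeg = SPos"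

fun ssign_neg :: "ssign \<Rightarrow> ssign" where
  "ssign_neg SPos = SNeg"
| "ssign_neg SNeg = SPos"
| "ssign_neg SBal = SBal"

lemma ssign_mul_SPos[simp]: "ssign_mul SPos t = t"
  by (cases t; simp)

lemma ssign_add_comm: "ssign_add s t = ssign_add t s"
  by (cases s; cases t; simp)
lemma ssign_add_assoc: "ssign_add (ssign_add s t) u = ssign_add s (ssign_add t u)"
  by (cases s; cases t; cases u; simp)
lemma ssign_mul_comm: "ssign_mul s t = ssign_mul t s"
  by (cases s; cases t; simp)
lemma ssign_mul_assoc: "ssign_mul (ssign_mul s t) u = ssign_mul s (ssign_mul t u)"
  by (cases s; cases t; cases u; simp)
lemma ssign_distrib: "ssign_mul (ssign_add s t) u = ssign_add (ssign_mul s u) (ssign_mul t u)"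
  by (cases s; cases t; cases u; simp)

instantiation smax :: (linordered_ab_group_add) comm_semiring_1
begin

definition zero_smax :: "'a smax" where "zero_smax = SZero"
definition one_smax :: "'a smax" where "one_smax = SElt 0 SPos"

fun plus_smax :: "'a smax \<Rightarrow> 'a smax \<Rightarrow> 'a smax" where
  "plus_smax SZero y = y"
| "plus_smax x SZero = x"
| "plus_smax (SElt a s) (SElt b t) =
     (if a < b then SElt b t else if b < a then SElt a s else SElt a (ssign_add s t))"

fun times_smax :: "'a smax \<Rightarrow> 'a smax \<Rightarrow> 'a smax" where
  "times_smax SZero y = SZero"
| "times_smax x SZero = SZero"
| "times_smax (SElt a s) (SElt b t) = SElt (a + b) (ssign_mul s t)"

instance
proof
  fix x y z :: "'a smax"
  show "x + y + z = x + (y + z)"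
    by (cases x; cases y; cases z; auto simp: ssign_add_assoc)
  show "x + y = y + x"
    by (cases x; cases y; auto simp: ssign_add_comm)
  show "0 + x = x" by (simp add: zero_smax_def)
  show "x * y * z = x * (y * z)"
    by (cases x; cases y; cases z; auto simp: ssign_mul_assoc add.assoc)
  show "x * y = y * x"
    by (cases x; cases y; auto simp: ssign_mul_comm add.commute)
  show "1 * x = x" by (cases x; simp add: one_smax_def)
  show "0 * x = 0" by (simp add: zero_smax_def)
  show "x * 0 = 0" by (cases x; simp add: zero_smax_def)
  show "(x + y) * z = x * z + y * z"
    by (cases x; cases y; cases z; auto simp: ssign_distrib)
  show "(0::'a smax) \<noteq> 1" by (simp add: zero_smax_def one_smax_def)
qed
end

fun sminus :: "'a smax \<Rightarrow> 'a smax" where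
  "sminus SZero = SZero"
| "sminus (SElt a s) = SElt a (ssign_neg s)"

definition sdiff :: "'a::linordered_ab_group_add smax \<Rightarrow> 'a smax \<Rightarrow> 'a smax" where
  "sdiff x y = x + sminus y"

definition sbalanced :: "'a::linordered_ab_group_add smax \<Rightarrow> bool" where
  "sbalanced x \<longleftrightarrow> (\<exists>c. x = sdiff c c)"

definition sbal :: "'a::linordered_ab_group_add smax \<Rightarrow> 'a smax \<Rightarrow> bool" where
  "sbal a b \<longleftrightarrow> sbalanced (sdiff a b)"

definition ssigned :: "'a smax \<Rightarrow> bool" where
  "ssigned x \<longleftrightarrow> x = SZero \<or> (\<exists>a. x = SElt a SPos \<or> x = SElt a SNeg)"

definition divisible_group :: "'a::ab_group_add itself \<Rightarrow> bool" where
  "divisible_group _ \<longleftrightarrow> (\<forall>(x::'a) (k::nat). k > 0 \<longrightarrow> (\<exists>y. (\<Sum>i<k. y) = x))"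

text \<open>n \<times> n matrices are functions nat \<Rightarrow> nat \<Rightarrow> 'a smax, with entries indexed by {..<n}.\<close>
type_synonym 'a smat = "nat \<Rightarrow> nat \<Rightarrow> 'a smax"

definition perm_sgn :: "(nat \<Rightarrow> nat) \<Rightarrow> 'a::linordered_ab_group_add smax" where
  "perm_sgn p = (if evenperm p then 1 else sminus 1)"

definition sdet :: "nat \<Rightarrow> 'a::linordered_ab_group_add smat \<Rightarrow> 'a smax" where
  "sdet n M = (\<Sum>p\<in>{p. p permutes {..<n}}. perm_sgn p * (\<Prod>i<n. M i (p i)))"

text \<open>Matrix with row j and column i removed (size n-1).\<close>
definition sminor :: "'a smat \<Rightarrow> nat \<Rightarrow> nat \<Rightarrow> 'a smat" where
  "sminor M j i = (\<lambda>k l. M (if k < j then k else Suc k) (if l < i then l else Suc l))"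

definition sadj :: "nat \<Rightarrow> 'a::linordered_ab_group_add smat \<Rightarrow> 'a smat" where
  "sadj n B = (\<lambda>i j. sminus 1 ^ (i + j) * sdet (n - 1) (sminor B j i))"

definition smat_mult :: "nat \<Rightarrow> 'a::linordered_ab_group_add smat \<Rightarrow> 'a smat \<Rightarrow> 'a smat" where
  "smat_mult n A B = (\<lambda>i j. \<Sum>k<n. A i k * B k j)"

definition smat_scale :: "'a::linordered_ab_group_add smax \<Rightarrow> 'a smat \<Rightarrow> 'a smat" where
  "smat_scale c M = (\<lambda>i j. c * M i j)"

definition smat_diff :: "'a::linordered_ab_group_add smat \<Rightarrow> 'a smat \<Rightarrow> 'a smat" where
  "smat_diff A B = (\<lambda>i j. sdiff (A i j) (B i j))"

definition smat_id :: "'a::linordered_ab_group_add smat" where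
  "smat_id = (\<lambda>i j. if i = j then 1 else 0)"

definition smat_bal :: "nat \<Rightarrow> 'a::linordered_ab_group_add smat \<Rightarrow> 'a smat \<Rightarrow> bool" where
  "smat_bal n A B \<longleftrightarrow> (\<forall>i<n. \<forall>j<n. sbal (A i j) (B i j))"

definition s_eigenvalue :: "nat \<Rightarrow> 'a::linordered_ab_group_add smat \<Rightarrow> 'a smax \<Rightarrow> bool" where
  "s_eigenvalue n A \<gamma> \<longleftrightarrow> ssigned \<gamma> \<and> sbal (sdet n (smat_diff (smat_scale \<gamma> smat_id) A)) 0"

end

theory Submission
  imports Defs "Jordan_Normal_Form.Determinant"
begin

lemma ssign_neg_add: "ssign_neg (ssign_add s t) = ssign_add (ssign_neg s) (ssign_neg t)"
  by (cases s; cases t; simp)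
lemma ssign_neg_mul: "ssign_neg (ssign_mul s t) = ssign_mul (ssign_neg s) t"
  by (cases s; cases t; simp)
lemma ssign_neg_neg[simp]: "ssign_neg (ssign_neg s) = s"
  by (cases s; simp)

lemma sminus_sminus[simp]: "sminus (sminus x) = x"
  by (cases x; simp)

lemma sminus_add: "sminus (x + y) = sminus x + sminus (y::'a::linordered_ab_group_add smax)"
  by (cases x; cases y; auto simp: ssign_neg_add)

lemma sminus_zero[simp]: "sminus (0::'a::linordered_ab_group_add smax) = 0"
  by (simp add: zero_smax_def)

lemma sminus_mult: "sminus (x * y) = sminus x * (y::'a::linordered_ab_group_add smax)"
  by (cases x; cases y; auto simp: ssign_neg_mul)

lemma sminus_one_mult: "sminus 1 * x = sminus (x::'a::linordered_ab_group_add smax)"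
  by (metis sminus_mult mult_1)

lemma sminus_sum: "sminus (sum f A) = (\<Sum>x\<in>A. sminus (f x::'a::linordered_ab_group_add smax))"
  by (induction A rule: infinite_finite_induct) (auto simp: sminus_add)

lemma sminus_one_sq: "sminus 1 * sminus 1 = (1::'a::linordered_ab_group_add smax)"
  by (simp add: one_smax_def)

lemma sminus_one_pow: "sminus 1 ^ k = (if even k then 1 else sminus (1::'a::linordered_ab_group_add smax))"
proof (induction k)
  case (Suc k) then show ?case using sminus_one_sq[where 'a='a] by auto
qed simp

lemma ssign_add_neg: "ssign_add s (ssign_neg s) = SBal"
  by (cases s; simp)

lemma sbalanced_iff: "sbalanced x \<longleftrightarrow> x = 0 \<or> (\<exists>a. x = SElt a SBal)"
proof
  assume "sbalanced x"
  then obtain c where "x = sdiff c c" by (auto simp: sbalanced_def)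
  then show "x = 0 \<or> (\<exists>a. x = SElt a SBal)"
    by (cases c) (auto simp: sdiff_def zero_smax_def ssign_add_neg)
next
  assume "x = 0 \<or> (\<exists>a. x = SElt a SBal)"
  then show "sbalanced x"
  proof
    assume "x = 0" then show ?thesis unfolding sbalanced_def
      by (rule_tac x=0 in exI) (simp add: sdiff_def zero_smax_def)
  next
    assume "\<exists>a. x = SElt a SBal"
    then obtain a where "x = SElt a SBal" by blast
    then show ?thesis unfolding sbalanced_def
      by (rule_tac x="SElt a SPos" in exI) (simp add: sdiff_def)
  qed
qed

lemma sbalanced_add: "sbalanced x \<Longrightarrow> sbalanced y \<Longrightarrow> sbalanced (x + y)"
  unfolding sbalanced_iff by (auto simp: zero_smax_def split: if_splits)

lemma sbalanced_sum: "(\<And>x. x \<in> A \<Longrightarrow> sbalanced (f x)) \<Longrightarrow> sbalanced (sum f A)"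
proof (induction A rule: infinite_finite_induct)
  case (infinite A) then show ?case by (simp add: sbalanced_iff)
next
  case empty then show ?case by (simp add: sbalanced_iff)
next
  case (insert x F) then show ?case by (simp add: sbalanced_add)
qed

lemma sbalanced_sminus: "sbalanced x \<Longrightarrow> sbalanced (sminus x)"
  unfolding sbalanced_iff by (auto simp: zero_smax_def)

lemma sbalanced_self: "sbalanced (x + sminus x)"
  unfolding sbalanced_def sdiff_def by blast

lemma perm_sgn_eq: "perm_sgn p = (if evenperm p then 1 else sminus 1)"
  by (simp add: perm_sgn_def)

lemma sdet_identical_rows:
  fixes M :: "'a::linordered_ab_group_add smat"
  assumes ij: "i < n" "j < n" "i \<noteq> j" and rows: "M i = M j"
  shows "sbalanced (sdet n M)"
proof -
  define S where "S = {p. p permutes {..<n}}"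
  define E where "E = {p\<in>S. evenperm p}"
  define Od where "Od = {p\<in>S. \<not> evenperm p}"
  define \<tau> where "\<tau> = Transposition.transpose i j"
  define T where "T p = (\<Prod>l<n. M l (p l))" for p
  have finS: "finite S" unfolding S_def by (simp add: finite_permutations)
  have tauS: "\<tau> permutes {..<n}" unfolding \<tau>_def using ij by (intro permutes_swap_id) auto
  have Mtau: "M (\<tau> l) = M l" for l
    unfolding \<tau>_def using rows by (auto simp: transpose_def)
  have Tcomp: "T (p \<circ> \<tau>) = T p" for p
  proof -
    have "T p = (\<Prod>l<n. M (\<tau> l) (p l))" unfolding T_def Mtau ..
    also have "\<dots> = (\<Prod>l<n. M (\<tau> (\<tau> l)) (p (\<tau> l)))"
      using prod.reindex_bij_betw[OF permutes_imp_bij[OF tauS], of "\<lambda>l. M (\<tau> l) (p l)"] by simp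
    also have "\<dots> = T (p \<circ> \<tau>)" unfolding T_def \<tau>_def by simp
    finally show ?thesis by simp
  qed
  have ev: "p \<in> S \<Longrightarrow> evenperm (p \<circ> \<tau>) \<longleftrightarrow> \<not> evenperm p" for p
    unfolding S_def \<tau>_def using ij
    by (subst evenperm_comp) (auto simp: evenperm_swap permutation_swap_id
         intro: permutes_imp_permutation)
  have bij: "bij_betw (\<lambda>p. p \<circ> \<tau>) E Od"
  proof (rule bij_betw_byWitness[where f'="\<lambda>p. p \<circ> \<tau>"])
    have tt: "\<tau> \<circ> \<tau> = id" unfolding \<tau>_def by simp
    show "\<forall>a\<in>E. a \<circ> \<tau> \<circ> \<tau> = a" "\<forall>a\<in>Od. a \<circ> \<tau> \<circ> \<tau> = a"
      by (simp_all add: comp_assoc tt)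
    show "(\<lambda>p. p \<circ> \<tau>) ` E \<subseteq> Od" "(\<lambda>p. p \<circ> \<tau>) ` Od \<subseteq> E"
      unfolding E_def Od_def using ev tauS
      by (auto simp: S_def intro: permutes_compose)
  qed
  have SEO: "S = E \<union> Od" "E \<inter> Od = {}" unfolding E_def Od_def by auto
  have "sdet n M = (\<Sum>p\<in>S. perm_sgn p * T p)" unfolding sdet_def S_def T_def ..
  also have "\<dots> = (\<Sum>p\<in>E. perm_sgn p * T p) + (\<Sum>p\<in>Od. perm_sgn p * T p)"
    using SEO finS by (simp add: sum.union_disjoint)
  also have "(\<Sum>p\<in>Od. perm_sgn p * T p) = (\<Sum>p\<in>E. perm_sgn (p \<circ> \<tau>) * T (p \<circ> \<tau>))"
    using sum.reindex_bij_betw[OF bij, of "\<lambda>p. perm_sgn p * T p"] by simp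
  also have "\<dots> = (\<Sum>p\<in>E. sminus (T p))"
    by (rule sum.cong) (auto simp: E_def ev Tcomp perm_sgn_eq sminus_one_mult)
  also have "(\<Sum>p\<in>E. perm_sgn p * T p) = (\<Sum>p\<in>E. T p)"
    by (rule sum.cong) (auto simp: E_def perm_sgn_eq)
  finally have "sdet n M = (\<Sum>p\<in>E. T p + sminus (T p))" by (simp add: sum.distrib)
  then show ?thesis by (simp add: sbalanced_sum sbalanced_self)
qed

lemma perm_sgn_insert:
  assumes q: "q permutes {0..<m}" and j: "j < Suc m" and k: "k < Suc m"
  shows "perm_sgn (permutation_insert j k q) =
    sminus 1 ^ (k + j) * (perm_sgn q :: 'a::linordered_ab_group_add smax)"
proof -
  have "(of_int (sign (permutation_insert j k q)) :: int) = (-1)^(j+k) * of_int (sign q)"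
    by (rule signof_permutation_insert[OF q j k])
  then have "sign (permutation_insert j k q) = (-1)^(j+k) * sign q" by simp
  then have "evenperm (permutation_insert j k q) \<longleftrightarrow> (evenperm q \<longleftrightarrow> even (j+k))"
    by (auto simp: sign_def minus_one_power_iff split: if_splits)
  then show ?thesis
    by (auto simp: perm_sgn_eq sminus_one_pow sminus_one_sq add.commute)
qed

lemma minor_expand:
  fixes B :: "'a::linordered_ab_group_add smat"
  assumes j: "j < Suc m" and k: "k < Suc m"
  shows "sminus 1 ^ (k + j) * sdet m (sminor B j k) =
    (\<Sum>p\<in>{p. p permutes {0..<Suc m} \<and> p j = k}. perm_sgn p * (\<Prod>l\<in>{..<Suc m}-{j}. B l (p l)))"
proof -
  have img: "{..<Suc m}-{j} = insert_index j ` {..<m}"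
  proof -
    have "x \<in> insert_index j ` {..<m}" if "x < Suc m" "x \<noteq> j" for x
      using that j by (intro image_eqI[of _ _ "delete_index j x"])
        (auto simp: insert_delete_index delete_index_def)
    then show ?thesis by (auto simp: insert_index_def)
  qed
  have injI: "inj_on (insert_index j) {..<m}"
    by (metis delete_insert_index inj_on_inverseI)
  have prodeq: "(\<Prod>l\<in>{..<Suc m}-{j}. B l (permutation_insert j k q l)) = (\<Prod>l<m. sminor B j k l (q l))"
    for q
  proof -
    have "(\<Prod>l\<in>{..<Suc m}-{j}. B l (permutation_insert j k q l)) =
      (\<Prod>l<m. B (insert_index j l) (permutation_insert j k q (insert_index j l)))"
      unfolding img by (rule prod.reindex[OF injI, unfolded comp_def])
    also have "\<dots> = (\<Prod>l<m. sminor B j k l (q l))"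
      by (rule prod.cong) (auto simp: permutation_insert_expand insert_index_def sminor_def)
    finally show ?thesis .
  qed
  have "(\<Sum>p\<in>{p. p permutes {0..<Suc m} \<and> p j = k}. perm_sgn p * (\<Prod>l\<in>{..<Suc m}-{j}. B l (p l)))
      = (\<Sum>q\<in>{q. q permutes {0..<m}}. perm_sgn (permutation_insert j k q) *
           (\<Prod>l\<in>{..<Suc m}-{j}. B l (permutation_insert j k q l)))"
    unfolding permutation_fix[OF j k]
    by (rule sum.reindex[OF permutation_insert_inj_on[OF j k], unfolded comp_def])
  also have "\<dots> = (\<Sum>q\<in>{q. q permutes {0..<m}}. sminus 1 ^ (k + j) * (perm_sgn q * (\<Prod>l<m. sminor B j k l (q l))))"
    by (rule sum.cong) (auto simp: perm_sgn_insert[OF _ j k] prodeq mult.assoc)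
  also have "\<dots> = sminus 1 ^ (k + j) * sdet m (sminor B j k)"
    by (simp add: sdet_def sum_distrib_left lessThan_atLeast0)
  finally show ?thesis by simp
qed

lemma adj_row:
  fixes B :: "'a::linordered_ab_group_add smat"
  assumes i: "i < n" and j: "j < n"
  shows "smat_mult n B (sadj n B) i j = sdet n (\<lambda>l. if l = j then B i else B l)"
proof -
  obtain m where n: "n = Suc m" using j by (cases n) auto
  define B' where "B' = (\<lambda>l. if l = j then B i else B l)"
  define S where "S = {p. p permutes {..<n}}"
  have finS: "finite S" unfolding S_def by (simp add: finite_permutations)
  have termeq: "B i k * (perm_sgn p * (\<Prod>l\<in>{..<Suc m}-{j}. B l (p l))) =
      perm_sgn p * (\<Prod>l<n. B' l (p l))" if "p j = k" for p k
  proof -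
    have "(\<Prod>l<n. B' l (p l)) = B' j (p j) * (\<Prod>l\<in>{..<n}-{j}. B' l (p l))"
      using j by (simp add: prod.remove)
    also have "(\<Prod>l\<in>{..<n}-{j}. B' l (p l)) = (\<Prod>l\<in>{..<Suc m}-{j}. B l (p l))"
      unfolding n by (rule prod.cong) (auto simp: B'_def)
    finally show ?thesis using that by (simp add: B'_def mult_ac)
  qed
  have "smat_mult n B (sadj n B) i j = (\<Sum>k<n. B i k * (sminus 1 ^ (k + j) * sdet m (sminor B j k)))"
    by (simp add: smat_mult_def sadj_def n)
  also have "\<dots> = (\<Sum>k<n. \<Sum>p\<in>{p. p \<in> S \<and> p j = k}. perm_sgn p * (\<Prod>l<n. B' l (p l)))"
  proof (rule sum.cong[OF refl])
    fix k assume k: "k \<in> {..<n}"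
    have "B i k * (sminus 1 ^ (k + j) * sdet m (sminor B j k)) =
      (\<Sum>p\<in>{p. p permutes {0..<Suc m} \<and> p j = k}. B i k * (perm_sgn p * (\<Prod>l\<in>{..<Suc m}-{j}. B l (p l))))"
      using k j unfolding n by (simp add: minor_expand sum_distrib_left)
    also have "\<dots> = (\<Sum>p\<in>{p. p \<in> S \<and> p j = k}. perm_sgn p * (\<Prod>l<n. B' l (p l)))"
      by (rule sum.cong, simp add: S_def n lessThan_atLeast0, rule termeq, simp)
    finally show "B i k * (sminus 1 ^ (k + j) * sdet m (sminor B j k)) =
      (\<Sum>p\<in>{p. p \<in> S \<and> p j = k}. perm_sgn p * (\<Prod>l<n. B' l (p l)))" .
  qed
  also have "\<dots> = (\<Sum>p\<in>S. perm_sgn p * (\<Prod>l<n. B' l (p l)))"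
  proof (rule sum.group[OF finS])
    show "(\<lambda>p. p j) ` S \<subseteq> {..<n}" using j by (auto simp: S_def dest: permutes_in_image[where x=j])
  qed simp
  also have "\<dots> = sdet n B'" by (simp add: sdet_def S_def)
  finally show ?thesis by (simp add: B'_def)
qed

theorem proposition3p35:
  fixes A :: "'a::linordered_ab_group_add smat" and n :: nat and \<gamma> :: "'a smax"
  assumes "divisible_group TYPE('a)"
    and "s_eigenvalue n A \<gamma>"
  shows "let B = smat_diff (smat_scale \<gamma> smat_id) A in
         smat_bal n (smat_mult n A (sadj n B)) (smat_scale \<gamma> (sadj n B))"
proof -
  define B where "B = smat_diff (smat_scale \<gamma> smat_id) A"
  define C where "C = sadj n B"
  have detB: "sbalanced (sdet n B)"
    using assms(2) by (simp add: s_eigenvalue_def sbal_def B_def sdiff_def)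
  have "sbal (smat_mult n A C i j) (\<gamma> * C i j)" if i: "i < n" and j: "j < n" for i j
  proof -
    have "smat_mult n B C i j = (\<Sum>k<n. (if i = k then \<gamma> * C k j else 0) + sminus (A i k * C k j))"
      unfolding smat_mult_def B_def smat_diff_def smat_scale_def smat_id_def sdiff_def
      by (rule sum.cong) (auto simp: distrib_right sminus_mult)
    also have "\<dots> = \<gamma> * C i j + sminus (smat_mult n A C i j)"
      using i by (simp add: sum.distrib sminus_sum smat_mult_def)
    finally have eq: "smat_mult n B C i j = sminus (sdiff (smat_mult n A C i j) (\<gamma> * C i j))"
      by (simp add: sdiff_def sminus_add add.commute)
    have "sbalanced (smat_mult n B C i j)"
    proof (cases "i = j")
      case True
      then have "(\<lambda>l. if l = j then B i else B l) = B" by auto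
      then show ?thesis using adj_row[OF i j, of B] detB by (simp add: C_def)
    next
      case False
      show ?thesis unfolding C_def adj_row[OF i j]
        by (rule sdet_identical_rows[OF i j False]) (use False in auto)
    qed
    then have "sbalanced (sminus (smat_mult n B C i j))" by (rule sbalanced_sminus)
    then show ?thesis unfolding eq sbal_def by simp
  qed
  then show ?thesis
    by (simp add: Let_def smat_bal_def smat_scale_def C_def B_def)
qed

end
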